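(* Let $A$ be a binary matrix that has an optimal binary decomposition $A=U\cdot V$ such that every row of $V$ is a row of $A$. If, in addition, $A$ has the Unique base rows sums property, then the set of columns of $U$ spans (in the binary sense) every binary base of $A$, and consequently $A$ has the Augmentation property for the binary rank.
   Context: For a binary $n\times m$ matrix $A$, the binary rank $R_{binary}(A)$ is the least $k$ with $A=UV$, $U\in\{0,1\}^{n\times k}$, $V\in\{0,1\}^{k\times m}$, ordinary arithmetic; such a decomposition with $k=R_{binary}(A)$ is an optimal binary decomposition. A set $X$ of $\{0,1\}$-vectors spans a vector $y$ (binary sense) if $y=\sum_{x\in X}c_x x$ with $c_x\in\{0,1\}$ and ordinary addition; it spans a set $Y$ if it spans each vector of $Y$. A binary base of $A$ is a set of $\{0,1\}$ column vectors spanning all columns of $A$ of minimum cardinality among such spanning sets. $A$ has the Unique base rows sums property if for every optimal binary decomposition $A=X\cdot Y$, there are no two disjoint nonempty sets of row indices $\{i_1,\dots,i_s\}$, $\{j_1,\dots,j_t\}$ of $Y$ with $y_{i_1}+\dots+y_{i_s}=y_{j_1}+\dots+y_{j_t}$ (ordinary addition). $A$ has the Augmentation property for the binary rank if for all binary column vectors $x_1,\dots,x_t$ with $R_{binary}(A|x_i)=R_{binary}(A)$ for all $i$, also $R_{binary}(A|x_1,\dots,x_t)=R_{binary}(A)$, where $(A|x_1,\dots,x_t)$ is $A$ with these columns appended. *)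

theory Defs
  imports Main
begin

text \<open>Matrices are functions nat => nat => nat, used only on the index range
  i < n (rows), j < m (columns); arithmetic is ordinary arithmetic on nat.
  Column vectors of length n are lists of length n.\<close>

definition binmat :: "nat \<Rightarrow> nat \<Rightarrow> (nat \<Rightarrow> nat \<Rightarrow> nat) \<Rightarrow> bool" where
  "binmat n m A \<longleftrightarrow> (\<forall>i<n. \<forall>j<m. A i j \<in> {0,1})"

definition is_bdecomp ::
  "nat \<Rightarrow> nat \<Rightarrow> (nat \<Rightarrow> nat \<Rightarrow> nat) \<Rightarrow> nat \<Rightarrow> (nat \<Rightarrow> nat \<Rightarrow> nat) \<Rightarrow> (nat \<Rightarrow> nat \<Rightarrow> nat) \<Rightarrow> bool" where
  "is_bdecomp n m A k U V \<longleftrightarrow> binmat n k U \<and> binmat k m V \<and>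
     (\<forall>i<n. \<forall>j<m. A i j = (\<Sum>l<k. U i l * V l j))"

definition brank :: "nat \<Rightarrow> nat \<Rightarrow> (nat \<Rightarrow> nat \<Rightarrow> nat) \<Rightarrow> nat" where
  "brank n m A = (LEAST k. \<exists>U V. is_bdecomp n m A k U V)"

definition optimal_bdecomp ::
  "nat \<Rightarrow> nat \<Rightarrow> (nat \<Rightarrow> nat \<Rightarrow> nat) \<Rightarrow> nat \<Rightarrow> (nat \<Rightarrow> nat \<Rightarrow> nat) \<Rightarrow> (nat \<Rightarrow> nat \<Rightarrow> nat) \<Rightarrow> bool" where
  "optimal_bdecomp n m A k U V \<longleftrightarrow> is_bdecomp n m A k U V \<and> k = brank n m A"

definition col :: "nat \<Rightarrow> (nat \<Rightarrow> nat \<Rightarrow> nat) \<Rightarrow> nat \<Rightarrow> nat list" where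
  "col n A j = map (\<lambda>i. A i j) [0..<n]"

definition binvec :: "nat \<Rightarrow> nat list \<Rightarrow> bool" where
  "binvec n x \<longleftrightarrow> length x = n \<and> set x \<subseteq> {0,1}"

definition bspans :: "nat \<Rightarrow> nat list set \<Rightarrow> nat list \<Rightarrow> bool" where
  "bspans n X y \<longleftrightarrow> (\<exists>c. (\<forall>x\<in>X. c x \<in> {0::nat,1}) \<and>
      (\<forall>i<n. y ! i = (\<Sum>x\<in>X. c x * x ! i)))"

definition spans_cols :: "nat \<Rightarrow> nat \<Rightarrow> (nat \<Rightarrow> nat \<Rightarrow> nat) \<Rightarrow> nat list set \<Rightarrow> bool" where
  "spans_cols n m A X \<longleftrightarrow> (\<forall>j<m. bspans n X (col n A j))"

definition binary_base :: "nat \<Rightarrow> nat \<Rightarrow> (nat \<Rightarrow> nat \<Rightarrow> nat) \<Rightarrow> nat list set \<Rightarrow> bool" where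
  "binary_base n m A B \<longleftrightarrow> finite B \<and> (\<forall>b\<in>B. binvec n b) \<and> spans_cols n m A B \<and>
     (\<forall>X. finite X \<and> (\<forall>x\<in>X. binvec n x) \<and> spans_cols n m A X \<longrightarrow> card B \<le> card X)"

definition unique_base_rows_sums :: "nat \<Rightarrow> nat \<Rightarrow> (nat \<Rightarrow> nat \<Rightarrow> nat) \<Rightarrow> bool" where
  "unique_base_rows_sums n m A \<longleftrightarrow>
     (\<forall>k X Y. optimal_bdecomp n m A k X Y \<longrightarrow>
        \<not> (\<exists>I J. I \<subseteq> {..<k} \<and> J \<subseteq> {..<k} \<and> I \<noteq> {} \<and> J \<noteq> {} \<and> I \<inter> J = {} \<and>
              (\<forall>j<m. (\<Sum>i\<in>I. Y i j) = (\<Sum>i\<in>J. Y i j))))"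

definition append_cols :: "nat \<Rightarrow> (nat \<Rightarrow> nat \<Rightarrow> nat) \<Rightarrow> nat list list \<Rightarrow> nat \<Rightarrow> nat \<Rightarrow> nat" where
  "append_cols m A xs = (\<lambda>i j. if j < m then A i j else (xs ! (j - m)) ! i)"

definition augmentation_property :: "nat \<Rightarrow> nat \<Rightarrow> (nat \<Rightarrow> nat \<Rightarrow> nat) \<Rightarrow> bool" where
  "augmentation_property n m A \<longleftrightarrow>
     (\<forall>xs. (\<forall>x\<in>set xs. binvec n x) \<and>
        (\<forall>x\<in>set xs. brank n (m + 1) (append_cols m A [x]) = brank n m A) \<longrightarrow>
        brank n (m + length xs) (append_cols m A xs) = brank n m A)"

end

theory Submission
  imports Defs
begin
lemma brank_le: "is_bdecomp n m A k U V \<Longrightarrow> brank n m A \<le> k"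
  unfolding brank_def by (rule Least_le) blast

lemma nonzero_rows:
  assumes WZ: "is_bdecomp n m A k W Z" and kb: "k = brank n m A" and p: "p < k"
  shows "\<exists>j<m. Z p j \<noteq> 0"
proof (rule ccontr)
  assume "\<not> (\<exists>j<m. Z p j \<noteq> 0)"
  hence z: "\<forall>j<m. Z p j = 0" by auto
  define h where "h l = (if l < p then l else Suc l)" for l
  have inj: "inj_on h {..<k-1}" unfolding inj_on_def h_def by auto
  have img: "h ` {..<k-1} = {..<k}-{p}"
  proof
    show "h ` {..<k-1} \<subseteq> {..<k}-{p}" using p unfolding h_def by auto
    show "{..<k}-{p} \<subseteq> h ` {..<k-1}"
    proof
      fix x assume x: "x \<in> {..<k}-{p}"
      show "x \<in> h ` {..<k-1}"
      proof (cases "x < p")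
        case True then show ?thesis using x p unfolding h_def by (auto intro!: image_eqI[of _ _ x])
      next
        case False then show ?thesis using x p unfolding h_def by (auto intro!: image_eqI[of _ _ "x - 1"])
      qed
    qed
  qed
  have bij: "bij_betw h {..<k-1} ({..<k}-{p})" using inj img by (simp add: bij_betw_def)
  have "is_bdecomp n m A (k-1) (\<lambda>i l. W i (h l)) (\<lambda>l j. Z (h l) j)"
    unfolding is_bdecomp_def
  proof (intro conjI)
    have hk: "\<And>l. l < k - 1 \<Longrightarrow> h l < k" unfolding h_def by auto
    show "binmat n (k - 1) (\<lambda>i l. W i (h l))" using WZ hk unfolding is_bdecomp_def binmat_def by auto
    show "binmat (k - 1) m (\<lambda>l j. Z (h l) j)" using WZ hk unfolding is_bdecomp_def binmat_def by auto
    show "\<forall>i<n. \<forall>j<m. A i j = (\<Sum>l<k - 1. W i (h l) * Z (h l) j)"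
    proof (intro allI impI)
      fix i j assume i: "i < n" and j: "j < m"
      have "A i j = (\<Sum>l<k. W i l * Z l j)" using WZ i j unfolding is_bdecomp_def by auto
      also have "\<dots> = W i p * Z p j + (\<Sum>l\<in>{..<k}-{p}. W i l * Z l j)"
        using p by (subst sum.remove[of _ p]) auto
      also have "\<dots> = (\<Sum>l\<in>{..<k}-{p}. W i l * Z l j)" using z j by simp
      also have "\<dots> = (\<Sum>l<k - 1. W i (h l) * Z (h l) j)"
        using sum.reindex_bij_betw[OF bij, of "\<lambda>l. W i l * Z l j"] by simp
      finally show "A i j = (\<Sum>l<k - 1. W i (h l) * Z (h l) j)" .
    qed
  qed
  hence "brank n m A \<le> k - 1" by (rule brank_le)
  thus False using kb p by simp
qed

lemma col_nth: "i < n \<Longrightarrow> col n U l ! i = U i l"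
  unfolding col_def by simp

lemma idx_to_set:
  assumes d: "\<forall>l<k. d l \<in> {0,1}" and y: "\<forall>i<n. y ! i = (\<Sum>l<k. d l * U i l)"
    and y1: "\<forall>i<n. y ! i \<le> 1"
  shows "bspans n {col n U l | l. l < k} y"
proof -
  define S where "S = {l. l < k \<and> d l = 1 \<and> (\<exists>i<n. U i l \<noteq> 0)}"
  define g where "g = col n U"
  have X: "{col n U l | l. l < k} = g ` {..<k}" unfolding g_def by auto
  have inj: "inj_on g S"
  proof (rule inj_onI, rule ccontr)
    fix l l' assume l: "l \<in> S" and l': "l' \<in> S" and e: "g l = g l'" and ne: "l \<noteq> l'"
    obtain i where i: "i < n" "U i l \<noteq> 0" using l S_def by auto
    have "U i l' = U i l" using e i col_nth unfolding g_def by metis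
    have "(\<Sum>q\<in>{l,l'}. d q * U i q) \<le> (\<Sum>q<k. d q * U i q)"
      using l l' S_def by (intro sum_mono2) auto
    also have "\<dots> \<le> 1" using y y1 i by simp
    finally show False using ne \<open>U i l' = U i l\<close> l l' i S_def by auto
  qed
  define c where "c x = (if x \<in> g ` S then 1 else 0::nat)" for x
  show ?thesis unfolding bspans_def
  proof (intro exI[of _ c] conjI allI impI ballI)
    show "\<And>x. c x \<in> {0,1}" unfolding c_def by auto
    fix i assume i: "i < n"
    have gS: "g ` S \<subseteq> g ` {..<k}" unfolding S_def by auto
    have "(\<Sum>x\<in>{col n U l | l. l < k}. c x * x ! i) = (\<Sum>x\<in>g ` S. c x * x ! i)"
      unfolding X using gS by (intro sum.mono_neutral_right) (auto simp: c_def)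
    also have "\<dots> = (\<Sum>x\<in>g ` S. x ! i)" by (intro sum.cong) (auto simp: c_def)
    also have "\<dots> = (\<Sum>l\<in>S. g l ! i)" using inj by (simp add: sum.reindex)
    also have "\<dots> = (\<Sum>l\<in>S. d l * U i l)" using i unfolding g_def S_def by (intro sum.cong) (auto simp: col_nth)
    also have "\<dots> = (\<Sum>l<k. d l * U i l)"
    proof (rule sum.mono_neutral_left)
      show "\<forall>x\<in>{..<k} - S. d x * U i x = 0" using d i unfolding S_def by auto
    qed (auto simp: S_def)
    finally show "y ! i = (\<Sum>x\<in>{col n U l | l. l < k}. c x * x ! i)" using y i by simp
  qed
qed


lemma core:
  assumes A: "binmat n m A"
    and UV: "is_bdecomp n m A k U V" and kb: "k = brank n m A"
    and r: "\<forall>l<k. r l < n \<and> (\<forall>j<m. V l j = A (r l) j)"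
    and ub: "unique_base_rows_sums n m A"
    and WZ: "is_bdecomp n m A k W Z"
    and i: "i < n"
  shows "\<forall>p<k. W i p = (\<Sum>l<k. U i l * W (r l) p)"
proof -
  define a where "a p = W i p" for p
  define c where "c p = (\<Sum>l<k. U i l * W (r l) p)" for p
  have eq: "\<forall>j<m. (\<Sum>p<k. a p * Z p j) = (\<Sum>p<k. c p * Z p j)"
  proof (intro allI impI)
    fix j assume j: "j < m"
    have "(\<Sum>p<k. a p * Z p j) = A i j" using WZ i j unfolding is_bdecomp_def a_def by simp
    also have "\<dots> = (\<Sum>l<k. U i l * V l j)" using UV i j unfolding is_bdecomp_def by simp
    also have "\<dots> = (\<Sum>l<k. U i l * (\<Sum>p<k. W (r l) p * Z p j))"
      using r WZ j unfolding is_bdecomp_def by (intro sum.cong) auto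
    also have "\<dots> = (\<Sum>l<k. \<Sum>p<k. U i l * W (r l) p * Z p j)"
      by (simp add: sum_distrib_left mult.assoc)
    also have "\<dots> = (\<Sum>p<k. \<Sum>l<k. U i l * W (r l) p * Z p j)" by (rule sum.swap)
    also have "\<dots> = (\<Sum>p<k. c p * Z p j)" unfolding c_def by (simp add: sum_distrib_right)
    finally show "(\<Sum>p<k. a p * Z p j) = (\<Sum>p<k. c p * Z p j)" .
  qed
  have nz: "\<forall>p<k. \<exists>j<m. Z p j \<noteq> 0" using nonzero_rows[OF WZ kb] by blast
  have c1: "\<forall>p<k. c p \<le> 1"
  proof (intro allI impI)
    fix p assume p: "p < k"
    obtain j where j: "j < m" "Z p j \<noteq> 0" using nz p by blast
    have "c p \<le> c p * Z p j" using j by simp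
    also have "\<dots> \<le> (\<Sum>q<k. c q * Z q j)" using p by (intro member_le_sum) auto
    also have "\<dots> = A i j" using eq j WZ i unfolding is_bdecomp_def a_def by simp
    also have "\<dots> \<le> 1" using A i j unfolding binmat_def by fastforce
    finally show "c p \<le> 1" .
  qed
  have a1: "\<forall>p<k. a p \<le> 1" using WZ i unfolding is_bdecomp_def binmat_def a_def by fastforce
  define I where "I = {p. p < k \<and> a p = 1 \<and> c p = 0}"
  define J where "J = {p. p < k \<and> a p = 0 \<and> c p = 1}"
  have sumeq: "\<forall>j<m. (\<Sum>p\<in>I. Z p j) = (\<Sum>p\<in>J. Z p j)"
  proof (intro allI impI)
    fix j assume j: "j < m"
    have pw: "\<And>p. p < k \<Longrightarrow> a p * Z p j + (if p \<in> J then Z p j else 0) = c p * Z p j + (if p \<in> I then Z p j else 0)"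
    proof -
      fix p assume p: "p < k"
      have "a p \<le> 1" "c p \<le> 1" using a1 c1 p by auto
      thus "a p * Z p j + (if p \<in> J then Z p j else 0) = c p * Z p j + (if p \<in> I then Z p j else 0)"
        using p unfolding I_def J_def
        by (cases "a p"; cases "c p") auto
    qed
    have "(\<Sum>p<k. a p * Z p j) + (\<Sum>p<k. if p \<in> J then Z p j else 0) = (\<Sum>p<k. c p * Z p j) + (\<Sum>p<k. if p \<in> I then Z p j else 0)"
      using pw by (simp add: sum.distrib[symmetric])
    hence "(\<Sum>p<k. if p \<in> J then Z p j else 0) = (\<Sum>p<k. if p \<in> I then Z p j else 0)"
      using eq j by simp
    moreover have "(\<Sum>p<k. if p \<in> J then Z p j else 0) = (\<Sum>p\<in>J. Z p j)"
      using sum.inter_restrict[of "{..<k}" "\<lambda>p. Z p j" J] by (simp add: Int_absorb1 J_def subset_eq) 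
    moreover have "(\<Sum>p<k. if p \<in> I then Z p j else 0) = (\<Sum>p\<in>I. Z p j)"
      using sum.inter_restrict[of "{..<k}" "\<lambda>p. Z p j" I] by (simp add: Int_absorb1 I_def subset_eq)
    ultimately show "(\<Sum>p\<in>I. Z p j) = (\<Sum>p\<in>J. Z p j)" by simp
  qed
  have opt: "optimal_bdecomp n m A k W Z" using WZ kb unfolding optimal_bdecomp_def by simp
  have "\<not> (I \<noteq> {} \<and> J \<noteq> {})"
  proof
    assume "I \<noteq> {} \<and> J \<noteq> {}"
    moreover have "I \<subseteq> {..<k}" "J \<subseteq> {..<k}" "I \<inter> J = {}" unfolding I_def J_def by auto
    ultimately show False using ub opt sumeq unfolding unique_base_rows_sums_def by blast
  qed
  moreover have finI: "finite I" "finite J" unfolding I_def J_def by auto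
  have "I = {}"
  proof (rule ccontr)
    assume "I \<noteq> {}"
    then obtain p where p: "p \<in> I" by auto
    have "J = {}" using \<open>I \<noteq> {}\<close> calculation by blast
    hence "\<forall>j<m. (\<Sum>p\<in>I. Z p j) = 0" using sumeq by simp
    hence "\<forall>j<m. Z p j = 0" using finI p by simp
    thus False using nz p unfolding I_def by auto
  qed
  moreover have "J = {}"
  proof (rule ccontr)
    assume "J \<noteq> {}"
    then obtain p where p: "p \<in> J" by auto
    hence "\<forall>j<m. (\<Sum>p\<in>J. Z p j) = 0" using sumeq \<open>I = {}\<close> by simp
    hence "\<forall>j<m. Z p j = 0" using finI p by simp
    thus False using nz p unfolding J_def by auto
  qed
  ultimately show ?thesis
  proof (intro allI impI)
    fix p assume p: "p < k"
    have "a p \<le> 1" "c p \<le> 1" using a1 c1 p by auto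
    hence "a p = c p" using \<open>I = {}\<close> \<open>J = {}\<close> p unfolding I_def J_def
      by (cases "a p"; cases "c p") auto
    thus "W i p = (\<Sum>l<k. U i l * W (r l) p)" unfolding a_def c_def .
  qed
qed


lemma brank_ex: "is_bdecomp n m A k U V \<Longrightarrow> \<exists>U V. is_bdecomp n m A (brank n m A) U V"
  unfolding brank_def by (rule LeastI[where P="\<lambda>k. \<exists>U V. is_bdecomp n m A k U V"]) blast
lemma binmat_decomp: "binmat n m M \<Longrightarrow> \<exists>k U V. is_bdecomp n m M k U V"
proof -
  assume M: "binmat n m M"
  have "\<And>i j. j < m \<Longrightarrow> (\<Sum>l<m. M i l * (if l = j then 1 else 0)) = M i j"
  proof -
    fix i j :: nat assume j: "j < m"
    have "(\<Sum>l<m. M i l * (if l = j then 1 else 0)) = (\<Sum>l<m. if l = j then M i l else 0)"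
      by (intro sum.cong) auto
    thus "(\<Sum>l<m. M i l * (if l = j then 1 else 0)) = M i j" using j by simp
  qed
  hence "is_bdecomp n m M m M (\<lambda>l j. if l = j then 1 else 0)"
    using M unfolding is_bdecomp_def binmat_def by auto
  thus ?thesis by blast
qed

lemma binvec_le1: "binvec n x \<Longrightarrow> i < n \<Longrightarrow> x ! i \<le> 1"
proof -
  assume x: "binvec n x" and i: "i < n"
  have "x ! i \<in> set x" using x i unfolding binvec_def by auto
  moreover have "set x \<subseteq> {0,1}" using x unfolding binvec_def by auto
  ultimately show "x ! i \<le> 1" by fastforce
qed

lemma restrict:
  assumes d: "is_bdecomp n m' (append_cols m A xs) k W Z" and le: "m \<le> m'"
  shows "is_bdecomp n m A k W Z"
  unfolding is_bdecomp_def
proof (intro conjI allI impI)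
  show "binmat n k W" using d unfolding is_bdecomp_def by auto
  show "binmat k m Z" using d le unfolding is_bdecomp_def binmat_def by auto
  fix i j assume i: "i < n" and j: "j < m"
  have "append_cols m A xs i j = (\<Sum>l<k. W i l * Z l j)" using d i j le unfolding is_bdecomp_def by auto
  thus "A i j = (\<Sum>l<k. W i l * Z l j)" using j by (simp add: append_cols_def)
qed

lemma x_spanned:
  assumes A: "binmat n m A"
    and UV: "is_bdecomp n m A k U V" and kb: "k = brank n m A"
    and r: "\<forall>l<k. r l < n \<and> (\<forall>j<m. V l j = A (r l) j)"
    and ub: "unique_base_rows_sums n m A"
    and x: "binvec n x" and bx: "brank n (m+1) (append_cols m A [x]) = k"
  shows "\<exists>d. (\<forall>l<k. d l \<in> {0,1}) \<and> (\<forall>i<n. x ! i = (\<Sum>l<k. d l * U i l))"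
proof -
  let ?M = "append_cols m A [x]"
  have "binmat n (m+1) ?M" using A x unfolding binmat_def binvec_def append_cols_def
    by (auto simp: less_Suc_eq) (metis nth_mem subsetD insertE singletonD)
  then obtain k0 U0 V0 where "is_bdecomp n (m+1) ?M k0 U0 V0" using binmat_decomp by blast
  then obtain W Z where WZM: "is_bdecomp n (m+1) ?M k W Z" using brank_ex bx by metis
  have WZ: "is_bdecomp n m A k W Z" using restrict[OF WZM] by simp
  define D where "D l = (\<Sum>p<k. W (r l) p * Z p m)" for l
  have xs: "\<forall>i<n. x ! i = (\<Sum>l<k. D l * U i l)"
  proof (intro allI impI)
    fix i assume i: "i < n"
    have cw: "\<forall>p<k. W i p = (\<Sum>l<k. U i l * W (r l) p)" using core[OF A UV kb r ub WZ i] .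
    have "x ! i = ?M i m" unfolding append_cols_def by simp
    also have "\<dots> = (\<Sum>p<k. W i p * Z p m)" using WZM i unfolding is_bdecomp_def by simp
    also have "\<dots> = (\<Sum>p<k. (\<Sum>l<k. U i l * W (r l) p) * Z p m)" using cw by simp
    also have "\<dots> = (\<Sum>p<k. \<Sum>l<k. U i l * W (r l) p * Z p m)" by (simp add: sum_distrib_right)
    also have "\<dots> = (\<Sum>l<k. \<Sum>p<k. U i l * W (r l) p * Z p m)" by (rule sum.swap)
    also have "\<dots> = (\<Sum>l<k. D l * U i l)" unfolding D_def
      by (simp add: sum_distrib_left sum_distrib_right ac_simps)
    finally show "x ! i = (\<Sum>l<k. D l * U i l)" .
  qed
  have x1: "\<forall>i<n. x ! i \<le> 1" using binvec_le1[OF x] by blast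
  define d where "d l = min (D l) 1" for l
  show ?thesis
  proof (intro exI[of _ d] conjI allI impI)
    fix l assume "l < k" thus "d l \<in> {0,1}" unfolding d_def by auto
  next
    fix i assume i: "i < n"
    have "\<And>l. l < k \<Longrightarrow> d l * U i l = D l * U i l"
    proof -
      fix l assume l: "l < k"
      show "d l * U i l = D l * U i l"
      proof (cases "U i l = 0")
        case False
        have "D l \<le> D l * U i l" using False by simp
        also have "\<dots> \<le> (\<Sum>l<k. D l * U i l)" using l by (intro member_le_sum) auto
        also have "\<dots> \<le> 1" using xs x1 i by simp
        finally show ?thesis unfolding d_def by simp
      qed simp
    qed
    hence "(\<Sum>l<k. d l * U i l) = (\<Sum>l<k. D l * U i l)" by (intro sum.cong) auto
    thus "x ! i = (\<Sum>l<k. d l * U i l)" using xs i by simp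
  qed
qed

theorem theorem2:
  fixes n m k :: nat and A U V :: "nat \<Rightarrow> nat \<Rightarrow> nat"
  assumes "binmat n m A"
    and "optimal_bdecomp n m A k U V"
    and "\<forall>l<k. \<exists>i<n. \<forall>j<m. V l j = A i j"
    and "unique_base_rows_sums n m A"
  shows "(\<forall>B. binary_base n m A B \<longrightarrow> (\<forall>b\<in>B. bspans n {col n U l | l. l < k} b))
         \<and> augmentation_property n m A"
proof -
  note A = assms(1) and ub = assms(4)
  have UV: "is_bdecomp n m A k U V" and kb: "k = brank n m A" using assms(2) unfolding optimal_bdecomp_def by auto
  obtain r where r: "\<forall>l<k. r l < n \<and> (\<forall>j<m. V l j = A (r l) j)" using assms(3) by metis
  have part1: "\<forall>B. binary_base n m A B \<longrightarrow> (\<forall>b\<in>B. bspans n {col n U l | l. l < k} b)"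
  proof (intro allI impI ballI)
    fix B b assume B: "binary_base n m A B" and b: "b \<in> B"
    have finB: "finite B" and Bv: "\<forall>b\<in>B. binvec n b" and Bs: "spans_cols n m A B"
      and Bmin: "\<And>X. finite X \<Longrightarrow> (\<forall>x\<in>X. binvec n x) \<Longrightarrow> spans_cols n m A X \<Longrightarrow> card B \<le> card X"
      using B unfolding binary_base_def by auto
    define N where "N = card B"
    obtain f where f: "bij_betw f {..<N} B" using ex_bij_betw_nat_finite[OF finB] unfolding N_def
      by (metis lessThan_atLeast0)
    obtain C where C: "\<forall>j<m. (\<forall>x\<in>B. C j x \<in> {0,1}) \<and> (\<forall>i<n. col n A j ! i = (\<Sum>x\<in>B. C j x * x ! i))"
      using Bs unfolding spans_cols_def bspans_def by metis
    define W where "W i p = f p ! i" for i p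
    define Z where "Z p j = C j (f p)" for p j
    have fB: "\<And>p. p < N \<Longrightarrow> f p \<in> B" using f unfolding bij_betw_def by auto
    have WZ: "is_bdecomp n m A N W Z" unfolding is_bdecomp_def
    proof (intro conjI)
      show "binmat n N W" unfolding binmat_def W_def
      proof (intro allI impI)
        fix i p assume i: "i < n" and p: "p < N"
        have "binvec n (f p)" using Bv fB p by auto
        thus "f p ! i \<in> {0,1}" using i unfolding binvec_def by (metis nth_mem subsetD)
      qed
      show "binmat N m Z" unfolding binmat_def Z_def using C fB by auto
      show "\<forall>i<n. \<forall>j<m. A i j = (\<Sum>l<N. W i l * Z l j)"
      proof (intro allI impI)
        fix i j assume i: "i < n" and j: "j < m"
        have "A i j = col n A j ! i" using i by (simp add: col_nth)
        also have "\<dots> = (\<Sum>x\<in>B. C j x * x ! i)" using C i j by auto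
        also have "\<dots> = (\<Sum>l<N. C j (f l) * f l ! i)"
          using sum.reindex_bij_betw[OF f, of "\<lambda>x. C j x * x ! i"] by simp
        finally show "A i j = (\<Sum>l<N. W i l * Z l j)" unfolding W_def Z_def by (simp add: mult.commute)
      qed
    qed
    have "k \<le> N" using brank_le[OF WZ] kb by simp
    moreover have "N \<le> k"
    proof -
      define X where "X = {col n U l | l. l < k}"
      have Xi: "X = (\<lambda>l. col n U l) ` {..<k}" unfolding X_def by auto
      have "finite X" unfolding Xi by simp
      moreover have "\<forall>x\<in>X. binvec n x"
        using UV unfolding X_def is_bdecomp_def binmat_def binvec_def col_def by fastforce
      moreover have "spans_cols n m A X" unfolding spans_cols_def X_def
      proof (intro allI impI)
        fix j assume j: "j < m"
        show "bspans n {col n U l | l. l < k} (col n A j)"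
        proof (rule idx_to_set[where d="\<lambda>l. V l j"])
          show "\<forall>l<k. V l j \<in> {0, 1}" using UV j unfolding is_bdecomp_def binmat_def by auto
          show "\<forall>i<n. col n A j ! i = (\<Sum>l<k. V l j * U i l)"
            using UV j unfolding is_bdecomp_def by (auto simp: col_nth mult.commute)
          show "\<forall>i<n. col n A j ! i \<le> 1" using A j unfolding binmat_def by (fastforce simp: col_nth)
        qed
      qed
      ultimately have "N \<le> card X" using Bmin unfolding N_def by blast
      also have "\<dots> \<le> k" unfolding Xi using card_image_le[of "{..<k}"] by simp
      finally show ?thesis .
    qed
    ultimately have Nk: "N = k" by simp
    obtain p where p: "p < N" "b = f p" using f b unfolding bij_betw_def by auto
    show "bspans n {col n U l | l. l < k} b"
    proof (rule idx_to_set[where d="\<lambda>l. W (r l) p"])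
      show "\<forall>l<k. W (r l) p \<in> {0, 1}" using WZ r p Nk unfolding is_bdecomp_def binmat_def by auto
      show "\<forall>i<n. b ! i = (\<Sum>l<k. W (r l) p * U i l)"
        using core[OF A UV kb r ub] WZ Nk p unfolding W_def by (auto simp: mult.commute)
      show "\<forall>i<n. b ! i \<le> 1"
      proof (intro allI impI)
        fix i assume i: "i < n"
        have "b ! i \<in> set b" using Bv b i unfolding binvec_def by auto
        moreover have "set b \<subseteq> {0,1}" using Bv b unfolding binvec_def by auto
        ultimately show "b ! i \<le> 1" by fastforce
      qed
    qed
  qed
  have part2: "augmentation_property n m A" unfolding augmentation_property_def
  proof (intro allI impI)
    fix xs assume h: "(\<forall>x\<in>set xs. binvec n x) \<and> (\<forall>x\<in>set xs. brank n (m + 1) (append_cols m A [x]) = brank n m A)"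
    have "\<forall>x\<in>set xs. \<exists>d. (\<forall>l<k. d l \<in> {0,1}) \<and> (\<forall>i<n. x ! i = (\<Sum>l<k. d l * U i l))"
      using x_spanned[OF A UV kb r ub] h kb by auto
    then obtain D where D: "\<forall>x\<in>set xs. (\<forall>l<k. D x l \<in> {0,1}) \<and> (\<forall>i<n. x ! i = (\<Sum>l<k. D x l * U i l))"
      by metis
    let ?M = "append_cols m A xs"
    define V' where "V' l j = (if j < m then V l j else D (xs ! (j - m)) l)" for l j
    have dec: "is_bdecomp n (m + length xs) ?M k U V'" unfolding is_bdecomp_def
    proof (intro conjI)
      show "binmat n k U" using UV unfolding is_bdecomp_def by auto
      show "binmat k (m + length xs) V'" unfolding binmat_def V'_def
        using UV D unfolding is_bdecomp_def binmat_def by auto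
      show "\<forall>i<n. \<forall>j<m + length xs. ?M i j = (\<Sum>l<k. U i l * V' l j)"
        using UV D unfolding is_bdecomp_def append_cols_def V'_def
        by (auto simp: mult.commute)
    qed
    have "brank n (m + length xs) ?M \<le> k" using brank_le[OF dec] .
    moreover have "k \<le> brank n (m + length xs) ?M"
    proof -
      obtain W Z where WZ: "is_bdecomp n (m + length xs) ?M (brank n (m + length xs) ?M) W Z"
        using brank_ex[OF dec] by blast
      have "is_bdecomp n m A (brank n (m + length xs) ?M) W Z"
        using restrict[OF WZ] by simp
      thus ?thesis using brank_le kb by metis
    qed
    ultimately show "brank n (m + length xs) ?M = brank n m A" using kb by simp
  qed
  show ?thesis using part1 part2 by blast
qed

end
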